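(* For any $0\le\lambda<n$ and $1\le p<\infty$, $V^{(\ast)}_{0,\infty}L^{p,\lambda}\subset\mathbb{L}^{p,\lambda}$.
   Context: $B(x,r)$ is the open ball in $\mathbb{R}^n$ with center $x$ and radius $r$. For $f\in L^1_{\mathrm{loc}}(\mathbb{R}^n)$ let $\mathfrak{M}_{p,\lambda}(f;x,r):=r^{-\lambda}\int_{B(x,r)}|f(y)|^p\,dy$. The homogeneous Morrey space $L^{p,\lambda}(\mathbb{R}^n)$ consists of $f\in L^p_{\mathrm{loc}}(\mathbb{R}^n)$ with $\|f\|_{p,\lambda}:=\sup_{x\in\mathbb{R}^n,\,r>0}\mathfrak{M}_{p,\lambda}(f;x,r)^{1/p}<\infty$. Subsets of $L^{p,\lambda}$: $V_0L^{p,\lambda}=\{f:\lim_{r\to0}\sup_{x}\mathfrak{M}_{p,\lambda}(f;x,r)=0\}$; $V_\infty L^{p,\lambda}=\{f:\lim_{r\to\infty}\sup_{x}\mathfrak{M}_{p,\lambda}(f;x,r)=0\}$; $V^{(\ast)}L^{p,\lambda}=\{f:\lim_{N\to\infty}\sup_{x}\int_{B(x,1)}|f(y)|^p\chi_{\mathbb{R}^n\setminus B(0,N)}(y)\,dy=0\}$; $V^{(\ast)}_{0,\infty}L^{p,\lambda}:=V_0L^{p,\lambda}\cap V_\infty L^{p,\lambda}\cap V^{(\ast)}L^{p,\lambda}$. The Zorko subspace is $\mathbb{L}^{p,\lambda}:=\{f\in L^{p,\lambda}(\mathbb{R}^n):\|f(\cdot-\xi)-f\|_{p,\lambda}\to0\text{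 as }\xi\to0\}$. *)

theory Defs
  imports "HOL-Analysis.Analysis"
begin

text \<open>Functions on R^n are modelled as functions on a Euclidean space type 'a,
  with n = DIM('a). Integrals are Lebesgue integrals (nonnegative integrals in ennreal).\<close>

definition morrey_M :: "real \<Rightarrow> real \<Rightarrow> ('a::euclidean_space \<Rightarrow> real) \<Rightarrow> 'a \<Rightarrow> real \<Rightarrow> ennreal" where
  "morrey_M p lam f x r =
     ennreal (r powr (- lam)) * (\<integral>\<^sup>+ y \<in> ball x r. ennreal (\<bar>f y\<bar> powr p) \<partial>lebesgue)"

definition morrey_normp :: "real \<Rightarrow> real \<Rightarrow> ('a::euclidean_space \<Rightarrow> real) \<Rightarrow> ennreal" where
  "morrey_normp p lam f = (SUP x\<in>UNIV. SUP r\<in>{0<..}. morrey_M p lam f x r)"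

definition morrey_space :: "real \<Rightarrow> real \<Rightarrow> ('a::euclidean_space \<Rightarrow> real) set" where
  "morrey_space p lam =
     {f. f \<in> borel_measurable lebesgue \<and>
         (\<forall>K. compact K \<longrightarrow> (\<integral>\<^sup>+ y \<in> K. ennreal (\<bar>f y\<bar> powr p) \<partial>lebesgue) < \<infinity>) \<and>
         morrey_normp p lam f < \<infinity>}"

definition V0_morrey :: "real \<Rightarrow> real \<Rightarrow> ('a::euclidean_space \<Rightarrow> real) set" where
  "V0_morrey p lam = {f \<in> morrey_space p lam.
      ((\<lambda>r. SUP x\<in>UNIV. morrey_M p lam f x r) \<longlongrightarrow> 0) (at_right 0)}"

definition Vinf_morrey :: "real \<Rightarrow> real \<Rightarrow> ('a::euclidean_space \<Rightarrow> real) set" where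
  "Vinf_morrey p lam = {f \<in> morrey_space p lam.
      ((\<lambda>r. SUP x\<in>UNIV. morrey_M p lam f x r) \<longlongrightarrow> 0) at_top}"

definition Vstar_morrey :: "real \<Rightarrow> real \<Rightarrow> ('a::euclidean_space \<Rightarrow> real) set" where
  "Vstar_morrey p lam = {f \<in> morrey_space p lam.
      ((\<lambda>N::real. SUP x\<in>UNIV. (\<integral>\<^sup>+ y \<in> ball x 1.
          ennreal (\<bar>f y\<bar> powr p) * indicator (UNIV - ball 0 N) y \<partial>lebesgue)) \<longlongrightarrow> 0) at_top}"

definition V0inf_star_morrey :: "real \<Rightarrow> real \<Rightarrow> ('a::euclidean_space \<Rightarrow> real) set" where
  "V0inf_star_morrey p lam = V0_morrey p lam \<inter> Vinf_morrey p lam \<inter> Vstar_morrey p lam"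

text \<open>Zorko subspace: the Morrey norm of f(.-xi) - f tends to 0 as xi tends to 0
  (stated via the p-th power of the norm, which is equivalent).\<close>
definition zorko_morrey :: "real \<Rightarrow> real \<Rightarrow> ('a::euclidean_space \<Rightarrow> real) set" where
  "zorko_morrey p lam = {f \<in> morrey_space p lam.
      ((\<lambda>\<xi>. morrey_normp p lam (\<lambda>y. f (y - \<xi>) - f y)) \<longlongrightarrow> 0) (at 0)}"

end

theory Submission
  imports Defs
begin


lemma lebesgue_translate_eq:
  fixes a :: "'a::euclidean_space"
  shows "lebesgue = distr lebesgue lebesgue (\<lambda>x. a + x)"
  and "(\<lambda>x. a + x) \<in> lebesgue \<rightarrow>\<^sub>M lebesgue"
proof -
  have T: "(\<lambda>x. a + (\<Sum>j\<in>(Basis::'a set). (1 * (x \<bullet> j)) *\<^sub>R j)) = (\<lambda>x. a + x)"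
    by (simp add: euclidean_representation)
  have "lebesgue = density (distr lebesgue lebesgue (\<lambda>x. a + x)) (\<lambda>_. (\<Prod>j\<in>(Basis::'a set). \<bar>1::real\<bar>))"
    using lebesgue_affine_euclidean[of "\<lambda>_. 1" a] T by simp
  then show "lebesgue = distr lebesgue lebesgue (\<lambda>x. a + x)"
    by (simp add: density_1)
  show "(\<lambda>x. a + x) \<in> lebesgue \<rightarrow>\<^sub>M lebesgue"
    using lebesgue_affine_measurable[of "\<lambda>_. 1" a] T by simp
qed

lemma meas_translate:
  fixes a :: "'a::euclidean_space"
  assumes "f \<in> borel_measurable lebesgue"
  shows "(\<lambda>y. f (y + a)) \<in> borel_measurable lebesgue"
proof -
  have "(\<lambda>y. f (a + y)) \<in> borel_measurable lebesgue"
    using measurable_compose[OF lebesgue_translate_eq(2)[of a] assms] by simp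
  then show ?thesis by (simp add: add.commute)
qed

lemma nn_integral_translate:
  fixes a :: "'a::euclidean_space"
  assumes "h \<in> borel_measurable lebesgue"
  shows "(\<integral>\<^sup>+ y. h (y + a) \<partial>lebesgue) = (\<integral>\<^sup>+ y. h y \<partial>lebesgue)"
proof -
  have "(\<integral>\<^sup>+ y. h y \<partial>lebesgue) = (\<integral>\<^sup>+ y. h y \<partial>distr lebesgue lebesgue (\<lambda>x. a + x))"
    using lebesgue_translate_eq(1)[of a] by simp
  also have "\<dots> = (\<integral>\<^sup>+ y. h (a + y) \<partial>lebesgue)"
    by (rule nn_integral_distr[OF lebesgue_translate_eq(2)]) (use assms in simp)
  finally show ?thesis by (simp add: add.commute)
qed

lemma nn_integral_translate_minus:
  fixes a :: "'a::euclidean_space"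
  assumes "h \<in> borel_measurable lebesgue"
  shows "(\<integral>\<^sup>+ y. h (y - a) \<partial>lebesgue) = (\<integral>\<^sup>+ y. h y \<partial>lebesgue)"
  using nn_integral_translate[OF assms, of "-a"] by simp

lemma eventually_norm_less:
  fixes d :: real assumes "d > 0"
  shows "eventually (\<lambda>\<xi>::'a::real_normed_vector. norm \<xi> < d) (at 0)"
proof -
  have "eventually (\<lambda>t::'a. t \<in> ball 0 d \<and> t \<in> UNIV) (at 0 within UNIV)"
    by (rule eventually_at_ball[OF assms])
  then show ?thesis by (rule eventually_mono) (simp add: dist_norm)
qed

lemma pow_ineq:
  fixes a b p :: real assumes "p > 0"
  shows "\<bar>a + b\<bar> powr p \<le> 2 powr p * (\<bar>a\<bar> powr p + \<bar>b\<bar> powr p)"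
proof -
  have "\<bar>a + b\<bar> \<le> 2 * max \<bar>a\<bar> \<bar>b\<bar>" by auto
  then have "\<bar>a + b\<bar> powr p \<le> (2 * max \<bar>a\<bar> \<bar>b\<bar>) powr p"
    by (intro powr_mono2) (use assms in auto)
  also have "\<dots> = 2 powr p * max \<bar>a\<bar> \<bar>b\<bar> powr p" by (simp add: powr_mult)
  also have "max \<bar>a\<bar> \<bar>b\<bar> powr p \<le> \<bar>a\<bar> powr p + \<bar>b\<bar> powr p"
    by (cases "\<bar>a\<bar> \<le> \<bar>b\<bar>") (auto simp: max_def)
  finally show ?thesis by (simp add: mult_left_mono)
qed



lemma ennreal_tendsto_0I:
  assumes "\<And>e. e > 0 \<Longrightarrow> eventually (\<lambda>x. X x \<le> ennreal e) F"
  shows "(X \<longlongrightarrow> (0::ennreal)) F"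
proof (rule order_tendstoI)
  fix a :: ennreal assume "a < 0" then show "eventually (\<lambda>x. a < X x) F" by simp
next
  fix a :: ennreal assume a: "0 < a"
  obtain e where e: "e > 0" "ennreal e < a"
  proof (cases a rule: ennreal_cases)
    case (real r)
    then show ?thesis using a that[of "r/2"] by (auto simp: ennreal_less_iff)
  next
    case top then show ?thesis using that[of 1] by simp
  qed
  show "eventually (\<lambda>x. X x < a) F"
    using assms[OF e(1)] by eventually_elim (use e in auto)
qed

lemma ennreal_tendsto_0I':
  fixes c :: real
  assumes c: "c > 0" and "\<And>e. e > 0 \<Longrightarrow> eventually (\<lambda>x. X x \<le> ennreal (c * e)) F"
  shows "(X \<longlongrightarrow> (0::ennreal)) F"
proof (rule ennreal_tendsto_0I)
  fix e :: real assume "e > 0"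
  then have "e / c > 0" using c by simp
  from assms(2)[OF this] show "eventually (\<lambda>x. X x \<le> ennreal e) F" using c by simp
qed

lemma sets_translate:
  fixes \<xi> :: "'a::euclidean_space"
  assumes "S \<in> sets lebesgue"
  shows "{y. y - \<xi> \<in> S} \<in> sets lebesgue"
    and "emeasure lebesgue {y. y - \<xi> \<in> S} = emeasure lebesgue S"
proof -
  have "indicator S \<in> borel_measurable lebesgue" using assms by simp
  from meas_translate[OF this, of "-\<xi>"]
  have m: "(\<lambda>y. indicator S (y - \<xi>) :: real) \<in> borel_measurable lebesgue" by simp
  have eq: "(\<lambda>y. indicator S (y - \<xi>) :: real) = indicator {y. y - \<xi> \<in> S}"
    by (auto simp: indicator_def)
  show "{y. y - \<xi> \<in> S} \<in> sets lebesgue"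
    using m unfolding eq by (simp add: borel_measurable_indicator_iff)
  have "emeasure lebesgue {y. y - \<xi> \<in> S} = (\<integral>\<^sup>+ y. indicator S (y - \<xi>) \<partial>lebesgue)"
  proof -
    have "(\<integral>\<^sup>+ y. indicator S (y - \<xi>) \<partial>lebesgue) = (\<integral>\<^sup>+ y. indicator {y. y - \<xi> \<in> S} y \<partial>lebesgue)"
      by (intro nn_integral_cong) (auto simp: indicator_def)
    then show ?thesis using \<open>{y. y - \<xi> \<in> S} \<in> sets lebesgue\<close> by simp
  qed
  also have "\<dots> = (\<integral>\<^sup>+ y. indicator S y \<partial>lebesgue)"
    by (rule nn_integral_translate_minus) (use assms in simp)
  also have "\<dots> = emeasure lebesgue S" using assms by simp
  finally show "emeasure lebesgue {y. y - \<xi> \<in> S} = emeasure lebesgue S" .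
qed

lemma set_translate_tendsto:
  fixes A :: "'a::euclidean_space set"
  assumes A: "A \<in> sets lebesgue" and Afin: "emeasure lebesgue A < \<infinity>"
  shows "((\<lambda>\<xi>. emeasure lebesgue {y. (y - \<xi> \<in> A) \<noteq> (y \<in> A)}) \<longlongrightarrow> 0) (at 0)"
proof (rule ennreal_tendsto_0I'[of 4])
  show "(0::real) < 4" by simp
next
  fix e :: real assume e: "e > 0"
  obtain U where U: "open U" "A \<subseteq> U" "(U - A) \<in> lmeasurable" "emeasure lebesgue (U - A) < ennreal e"
    using sets_lebesgue_outer_open[OF A e] by blast
  have Ul: "U \<in> sets lebesgue" using U(1) by simp
  have "emeasure lebesgue U \<le> emeasure lebesgue A + emeasure lebesgue (U - A)"
  proof -
    have "U = A \<union> (U - A)" using U(2) by blast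
    then have "emeasure lebesgue U = emeasure lebesgue (A \<union> (U - A))" by simp
    also have "\<dots> \<le> emeasure lebesgue A + emeasure lebesgue (U - A)"
      by (rule emeasure_subadditive) (use A Ul in auto)
    finally show ?thesis .
  qed
  also have "\<dots> < \<infinity>"
  proof -
    have "emeasure lebesgue (U - A) < \<infinity>" using U(4) by (rule order.strict_trans) simp
    then show ?thesis using Afin by simp
  qed
  finally have Ufin: "emeasure lebesgue U < \<infinity>" .
  define K where "K n = {x \<in> cball 0 (real n). \<forall>z. z \<notin> U \<longrightarrow> 1 / real (Suc n) \<le> dist x z}" for n
  have Kclosed: "closed (K n)" for n
  proof -
    have "K n = cball 0 (real n) \<inter> (\<Inter>z\<in>-U. {x. 1 / real (Suc n) \<le> dist x z})"
      by (auto simp: K_def)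
    moreover have "closed {x. 1 / real (Suc n) \<le> dist x z}" for z :: 'a
      by (intro closed_Collect_le continuous_intros)
    ultimately show ?thesis by (auto intro!: closed_Int closed_INT)
  qed
  have KU: "K n \<subseteq> U" for n
  proof
    fix x assume "x \<in> K n"
    then have "\<forall>z. z \<notin> U \<longrightarrow> 1 / real (Suc n) \<le> dist x z" by (simp add: K_def)
    moreover have "\<not> 1 / real (Suc n) \<le> dist x x" by simp
    ultimately show "x \<in> U" by blast
  qed
  have Kshift: "x + \<xi> \<in> U" if "x \<in> K n" "norm \<xi> < 1 / real (Suc n)" for x \<xi> n
  proof (rule ccontr)
    assume "x + \<xi> \<notin> U"
    with that(1) have "1 / real (Suc n) \<le> dist x (x + \<xi>)" by (auto simp: K_def)
    with that(2) show False by (simp add: dist_norm)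
  qed
  have dec: "decseq (\<lambda>n. U - K n)"
  proof (rule decseq_SucI)
    fix n
    have "K n \<subseteq> K (Suc n)"
    proof
      fix x assume x: "x \<in> K n"
      have "1 / real (Suc (Suc n)) \<le> 1 / real (Suc n)" by (simp add: frac_le)
      then show "x \<in> K (Suc n)" using x unfolding K_def by (auto intro: order_trans)
    qed
    then show "U - K (Suc n) \<subseteq> U - K n" by blast
  qed
  have inter: "(\<Inter>n. U - K n) = {}"
  proof (rule equals0I)
    fix x assume x: "x \<in> (\<Inter>n. U - K n)"
    then have "x \<in> U" by blast
    then obtain r where r: "r > 0" "ball x r \<subseteq> U" using U(1) open_contains_ball by blast
    obtain n1 :: nat where n1: "norm x \<le> real n1" using real_arch_simple by blast
    obtain n2 :: nat where n2: "1 / real (Suc n2) < r"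
      using r(1) by (metis nat_approx_posE)
    define n where "n = max n1 n2"
    have le: "1 / real (Suc n) \<le> 1 / real (Suc n2)" by (simp add: frac_le n_def)
    have "norm x \<le> real n" using n1 by (simp add: n_def)
    moreover have "1 / real (Suc n) \<le> dist x z" if "z \<notin> U" for z
    proof -
      have "z \<notin> ball x r" using that r(2) by blast
      then have "r \<le> dist x z" by simp
      then show ?thesis using le n2 by linarith
    qed
    ultimately have "x \<in> K n" by (simp add: K_def)
    with x show False by blast
  qed
  have "(\<lambda>n. emeasure lebesgue (U - K n)) \<longlonglongrightarrow> emeasure lebesgue (\<Inter>n. U - K n)"
  proof (rule Lim_emeasure_decseq)
    show "range (\<lambda>n. U - K n) \<subseteq> sets lebesgue" using Ul Kclosed by auto
    show "decseq (\<lambda>n. U - K n)" by (rule dec)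
    fix i
    have "emeasure lebesgue (U - K i) \<le> emeasure lebesgue U"
      by (rule emeasure_mono) (use Ul in auto)
    then show "emeasure lebesgue (U - K i) \<noteq> \<infinity>" using Ufin by (auto simp: top_unique)
  qed
  then have "(\<lambda>n. emeasure lebesgue (U - K n)) \<longlonglongrightarrow> 0" unfolding inter by simp
  then have "eventually (\<lambda>n. emeasure lebesgue (U - K n) < ennreal e) sequentially"
    using e by (intro order_tendstoD(2)) auto
  then obtain n where n: "emeasure lebesgue (U - K n) < ennreal e"
    by (auto simp: eventually_sequentially)
  show "eventually (\<lambda>\<xi>. emeasure lebesgue {y. (y - \<xi> \<in> A) \<noteq> (y \<in> A)} \<le> ennreal (4 * e)) (at 0)"
  proof -
    have "eventually (\<lambda>\<xi>::'a. norm \<xi> < 1 / real (Suc n)) (at 0)"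
      by (rule eventually_norm_less) simp
    then show ?thesis
    proof eventually_elim
      case (elim \<xi>)
      let ?S1 = "U - A" and ?S2 = "U - K n"
      have sub: "{y. (y - \<xi> \<in> A) \<noteq> (y \<in> A)} \<subseteq> ?S1 \<union> {y. y - \<xi> \<in> ?S1} \<union> ?S2 \<union> {y. y - \<xi> \<in> ?S2}"
      proof
        fix y assume y: "y \<in> {y. (y - \<xi> \<in> A) \<noteq> (y \<in> A)}"
        show "y \<in> ?S1 \<union> {y. y - \<xi> \<in> ?S1} \<union> ?S2 \<union> {y. y - \<xi> \<in> ?S2}"
        proof (cases "y - \<xi> \<in> A")
          case True
          then have "y \<notin> A" using y by auto
          show ?thesis
          proof (cases "y - \<xi> \<in> K n")
            case True
            then have "(y - \<xi>) + \<xi> \<in> U" using Kshift elim by blast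
            then show ?thesis using \<open>y \<notin> A\<close> by auto
          next
            case False then show ?thesis using \<open>y - \<xi> \<in> A\<close> U(2) by auto
          qed
        next
          case False
          then have "y \<in> A" using y by auto
          show ?thesis
          proof (cases "y \<in> K n")
            case True
            then have "y + (-\<xi>) \<in> U" using Kshift elim by (metis norm_minus_cancel)
            then show ?thesis using False by auto
          next
            case False then show ?thesis using \<open>y \<in> A\<close> U(2) by auto
          qed
        qed
      qed
      have S1: "?S1 \<in> sets lebesgue" using U(3) by blast
      have S2: "?S2 \<in> sets lebesgue" using Ul Kclosed by (simp add: sets.Diff)
      have "emeasure lebesgue {y. (y - \<xi> \<in> A) \<noteq> (y \<in> A)}
           \<le> emeasure lebesgue (?S1 \<union> {y. y - \<xi> \<in> ?S1} \<union> ?S2 \<union> {y. y - \<xi> \<in> ?S2})"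
        by (rule emeasure_mono[OF sub]) (use S1 S2 sets_translate(1)[OF S1] sets_translate(1)[OF S2] in auto)
      also have "\<dots> \<le> emeasure lebesgue ?S1 + emeasure lebesgue {y. y - \<xi> \<in> ?S1}
                     + emeasure lebesgue ?S2 + emeasure lebesgue {y. y - \<xi> \<in> ?S2}"
        by (intro order_trans[OF emeasure_subadditive] add_mono order_refl)
           (use S1 S2 sets_translate(1)[OF S1] sets_translate(1)[OF S2] in auto)
      also have "\<dots> = emeasure lebesgue ?S1 + emeasure lebesgue ?S1 + emeasure lebesgue ?S2 + emeasure lebesgue ?S2"
        using sets_translate(2)[OF S1] sets_translate(2)[OF S2] by simp
      also have "\<dots> \<le> ennreal e + ennreal e + ennreal e + ennreal e"
        using U(4) n by (intro add_mono) auto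
      also have "\<dots> = ennreal (4 * e)" using e by (simp flip: ennreal_plus)
      finally show ?case .
    qed
  qed
qed



lemma simple_translate_tendsto:
  fixes s :: "'a::euclidean_space \<Rightarrow> real" and p :: real
  assumes p: "p > 0" and sf: "simple_function lebesgue s"
    and fin: "(\<integral>\<^sup>+ y. ennreal (\<bar>s y\<bar> powr p) \<partial>lebesgue) < \<infinity>"
  shows "((\<lambda>\<xi>. \<integral>\<^sup>+ y. ennreal (\<bar>s (y - \<xi>) - s y\<bar> powr p) \<partial>lebesgue) \<longlongrightarrow> 0) (at 0)"
proof -
  define R where "R = s ` UNIV - {0}"
  have finR: "finite R" using sf unfolding simple_function_def R_def by simp
  define B where "B = (\<Sum>c\<in>R. \<bar>c\<bar>)"
  have B: "\<bar>s y\<bar> \<le> B" for y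
  proof (cases "s y = 0")
    case True then show ?thesis by (simp add: B_def sum_nonneg)
  next
    case False then have "s y \<in> R" by (simp add: R_def)
    then show ?thesis unfolding B_def using finR
      by (metis abs_ge_zero member_le_sum)
  qed
  define A where "A c = s -` {c}" for c
  have Ameas: "A c \<in> sets lebesgue" for c
  proof (cases "c \<in> range s")
    case True then obtain x where "c = s x" by blast
    then show ?thesis using sf unfolding simple_function_def A_def by simp
  next
    case False then have "A c = {}" by (auto simp: A_def)
    then show ?thesis by simp
  qed
  have Afin: "emeasure lebesgue (A c) < \<infinity>" if "c \<in> R" for c
  proof -
    have c0: "c \<noteq> 0" using that by (simp add: R_def)
    then have cp: "\<bar>c\<bar> powr p > 0" by simp
    have "ennreal (\<bar>c\<bar> powr p) * emeasure lebesgue (A c) = (\<integral>\<^sup>+ y. ennreal (\<bar>c\<bar> powr p) * indicator (A c) y \<partial>lebesgue)"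
      using Ameas by (simp add: nn_integral_cmult_indicator)
    also have "\<dots> \<le> (\<integral>\<^sup>+ y. ennreal (\<bar>s y\<bar> powr p) \<partial>lebesgue)"
      by (intro nn_integral_mono) (auto simp: indicator_def A_def)
    also have "\<dots> < \<infinity>" by (rule fin)
    finally have "ennreal (\<bar>c\<bar> powr p) * emeasure lebesgue (A c) < \<infinity>" .
    then show ?thesis using cp by (auto simp: ennreal_mult_less_top)
  qed
  define D where "D \<xi> c = {y. (y - \<xi> \<in> A c) \<noteq> (y \<in> A c)}" for \<xi> c
  have Dmeas: "D \<xi> c \<in> sets lebesgue" for \<xi> c
  proof -
    have "D \<xi> c = ({y. y - \<xi> \<in> A c} - A c) \<union> (A c - {y. y - \<xi> \<in> A c})" by (auto simp: D_def)
    then show ?thesis using sets_translate(1)[OF Ameas] Ameas by auto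
  qed
  define C where "C = ennreal ((2 * B) powr p)"
  have pt: "ennreal (\<bar>s (y - \<xi>) - s y\<bar> powr p) \<le> C * (\<Sum>c\<in>R. indicator (D \<xi> c) y)" for y \<xi>
  proof (cases "s (y - \<xi>) = s y")
    case True then show ?thesis by simp
  next
    case False
    have "\<exists>c\<in>R. y \<in> D \<xi> c"
    proof (cases "s y = 0")
      case True
      then have "s (y - \<xi>) \<in> R" using False by (auto simp: R_def)
      moreover have "y \<in> D \<xi> (s (y - \<xi>))" using False by (auto simp: D_def A_def)
      ultimately show ?thesis by blast
    next
      case F2: False
      then have "s y \<in> R" by (auto simp: R_def)
      moreover have "y \<in> D \<xi> (s y)" using False by (auto simp: D_def A_def)
      ultimately show ?thesis by blast
    qed
    then obtain c where c: "c \<in> R" "y \<in> D \<xi> c" by blast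
    have "(1::ennreal) = indicator (D \<xi> c) y" using c by simp
    also have "\<dots> \<le> (\<Sum>c\<in>R. indicator (D \<xi> c) y)"
      by (rule member_le_sum) (use c finR in auto)
    finally have one: "1 \<le> (\<Sum>c\<in>R. indicator (D \<xi> c) y :: ennreal)" .
    have "\<bar>s (y - \<xi>) - s y\<bar> \<le> 2 * B" using B[of y] B[of "y - \<xi>"] by linarith
    then have "\<bar>s (y - \<xi>) - s y\<bar> powr p \<le> (2 * B) powr p"
      by (intro powr_mono2) (use p in auto)
    then have "ennreal (\<bar>s (y - \<xi>) - s y\<bar> powr p) \<le> C" by (simp add: C_def)
    also have "\<dots> = C * 1" by simp
    also have "\<dots> \<le> C * (\<Sum>c\<in>R. indicator (D \<xi> c) y)" by (intro mult_left_mono one) simp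
    finally show ?thesis .
  qed
  have bound: "(\<integral>\<^sup>+ y. ennreal (\<bar>s (y - \<xi>) - s y\<bar> powr p) \<partial>lebesgue)
      \<le> C * (\<Sum>c\<in>R. emeasure lebesgue (D \<xi> c))" for \<xi>
  proof -
    have "(\<integral>\<^sup>+ y. ennreal (\<bar>s (y - \<xi>) - s y\<bar> powr p) \<partial>lebesgue)
        \<le> (\<integral>\<^sup>+ y. C * (\<Sum>c\<in>R. indicator (D \<xi> c) y) \<partial>lebesgue)"
      by (intro nn_integral_mono pt)
    also have "\<dots> = C * (\<integral>\<^sup>+ y. (\<Sum>c\<in>R. indicator (D \<xi> c) y) \<partial>lebesgue)"
      by (rule nn_integral_cmult) (use Dmeas in simp)
    also have "(\<integral>\<^sup>+ y. (\<Sum>c\<in>R. indicator (D \<xi> c) y) \<partial>lebesgue) = (\<Sum>c\<in>R. \<integral>\<^sup>+ y. indicator (D \<xi> c) y \<partial>lebesgue)"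
      by (rule nn_integral_sum) (use Dmeas in simp)
    also have "\<dots> = (\<Sum>c\<in>R. emeasure lebesgue (D \<xi> c))"
      using Dmeas by simp
    finally show ?thesis .
  qed
  have lim: "((\<lambda>\<xi>. C * (\<Sum>c\<in>R. emeasure lebesgue (D \<xi> c))) \<longlongrightarrow> C * (\<Sum>c\<in>R. 0)) (at 0)"
  proof (rule ennreal_tendsto_cmult)
    show "C < top" by (simp add: C_def)
    show "((\<lambda>\<xi>. \<Sum>c\<in>R. emeasure lebesgue (D \<xi> c)) \<longlongrightarrow> (\<Sum>c\<in>R. 0)) (at 0)"
    proof (rule tendsto_sum)
      fix c assume "c \<in> R"
      then show "((\<lambda>\<xi>. emeasure lebesgue (D \<xi> c)) \<longlongrightarrow> 0) (at 0)"
        unfolding D_def by (intro set_translate_tendsto Ameas Afin)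
    qed
  qed
  have lim0: "((\<lambda>\<xi>. C * (\<Sum>c\<in>R. emeasure lebesgue (D \<xi> c))) \<longlongrightarrow> 0) (at 0)"
    using lim by simp
  show ?thesis
    by (rule tendsto_sandwich[OF _ _ tendsto_const lim0]) (auto intro: always_eventually bound)
qed



lemma Lp_translate_tendsto:
  fixes g :: "'a::euclidean_space \<Rightarrow> real" and p :: real
  assumes p: "p > 0" and gm[measurable]: "g \<in> borel_measurable lebesgue"
    and fin: "(\<integral>\<^sup>+ y. ennreal (\<bar>g y\<bar> powr p) \<partial>lebesgue) < \<infinity>"
  shows "((\<lambda>\<xi>. \<integral>\<^sup>+ y. ennreal (\<bar>g (y - \<xi>) - g y\<bar> powr p) \<partial>lebesgue) \<longlongrightarrow> 0) (at 0)"
proof -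
  obtain F where F: "\<And>i. simple_function lebesgue (F i)"
      "\<And>x. (\<lambda>i. F i x) \<longlonglongrightarrow> g x" "\<And>i x. dist (F i x) 0 \<le> 2 * dist (g x) 0"
    using borel_measurable_implies_sequence_metric[OF gm, of 0] by auto
  have Fm[measurable]: "F i \<in> borel_measurable lebesgue" for i
    using F(1) by (rule borel_measurable_simple_function)
  have Fb: "\<bar>F i x\<bar> \<le> 2 * \<bar>g x\<bar>" for i x using F(3)[of i x] by simp
  have conv: "(\<lambda>i. \<integral>\<^sup>+ y. ennreal (\<bar>g y - F i y\<bar> powr p) \<partial>lebesgue) \<longlonglongrightarrow> (\<integral>\<^sup>+ y. 0 \<partial>(lebesgue :: 'a measure))"
  proof (rule nn_integral_dominated_convergence[where u="\<lambda>i y. ennreal (\<bar>g y - F i y\<bar> powr p)" and u'="\<lambda>y. 0" and w="\<lambda>y. ennreal (3 powr p) * ennreal (\<bar>g y\<bar> powr p)"])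
    show "(\<lambda>y. ennreal (3 powr p) * ennreal (\<bar>g y\<bar> powr p)) \<in> borel_measurable lebesgue" by measurable
    show "(\<lambda>y. ennreal (\<bar>g y - F i y\<bar> powr p)) \<in> borel_measurable lebesgue" for i by measurable
    show "(\<lambda>y. 0::ennreal) \<in> borel_measurable lebesgue" by simp
    show "AE y in lebesgue. ennreal (\<bar>g y - F i y\<bar> powr p) \<le> ennreal (3 powr p) * ennreal (\<bar>g y\<bar> powr p)" for i
    proof (rule AE_I2)
      fix y
      have "\<bar>g y - F i y\<bar> \<le> 3 * \<bar>g y\<bar>" using Fb[of i y] by linarith
      then have "\<bar>g y - F i y\<bar> powr p \<le> (3 * \<bar>g y\<bar>) powr p" by (intro powr_mono2) (use p in auto)
      also have "\<dots> = 3 powr p * \<bar>g y\<bar> powr p" by (simp add: powr_mult)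
      finally show "ennreal (\<bar>g y - F i y\<bar> powr p) \<le> ennreal (3 powr p) * ennreal (\<bar>g y\<bar> powr p)"
        by (simp add: ennreal_mult[symmetric])
    qed
    show "(\<integral>\<^sup>+ y. ennreal (3 powr p) * ennreal (\<bar>g y\<bar> powr p) \<partial>lebesgue) < \<infinity>"
      using fin by (simp add: nn_integral_cmult ennreal_mult_less_top)
    show "AE y in lebesgue. (\<lambda>i. ennreal (\<bar>g y - F i y\<bar> powr p)) \<longlonglongrightarrow> 0"
    proof (rule AE_I2)
      fix y
      have "(\<lambda>i. \<bar>g y - F i y\<bar>) \<longlonglongrightarrow> 0"
        using tendsto_diff[OF tendsto_const[of "g y"] F(2)[of y]] by (simp add: tendsto_rabs_zero_iff)
      then have "(\<lambda>i. \<bar>g y - F i y\<bar> powr p) \<longlonglongrightarrow> 0"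
        by (rule tendsto_zero_powrI) (use p in auto)
      then show "(\<lambda>i. ennreal (\<bar>g y - F i y\<bar> powr p)) \<longlonglongrightarrow> 0"
        using tendsto_ennrealI by fastforce
    qed
  qed
  define K where "K = 2 powr p"
  have Kpos: "K > 0" by (simp add: K_def)
  show ?thesis
  proof (rule ennreal_tendsto_0I'[of "K + 2 * K * K"])
    show "0 < K + 2 * K * K" using Kpos by (simp add: add_pos_pos)
  next
    fix e :: real assume e: "e > 0"
    have "eventually (\<lambda>i. (\<integral>\<^sup>+ y. ennreal (\<bar>g y - F i y\<bar> powr p) \<partial>lebesgue) < ennreal e) sequentially"
      using conv e by (intro order_tendstoD(2)) auto
    then obtain i where i: "(\<integral>\<^sup>+ y. ennreal (\<bar>g y - F i y\<bar> powr p) \<partial>lebesgue) < ennreal e"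
      by (auto simp: eventually_sequentially)
    define s where "s = F i"
    have sm[measurable]: "s \<in> borel_measurable lebesgue" by (simp add: s_def)
    have sfin: "(\<integral>\<^sup>+ y. ennreal (\<bar>s y\<bar> powr p) \<partial>lebesgue) < \<infinity>"
    proof -
      have "(\<integral>\<^sup>+ y. ennreal (\<bar>s y\<bar> powr p) \<partial>lebesgue) \<le> (\<integral>\<^sup>+ y. ennreal (2 powr p) * ennreal (\<bar>g y\<bar> powr p) \<partial>lebesgue)"
      proof (intro nn_integral_mono)
        fix y
        have "\<bar>s y\<bar> powr p \<le> (2 * \<bar>g y\<bar>) powr p" using Fb[of i y] p by (intro powr_mono2) (auto simp: s_def)
        also have "\<dots> = 2 powr p * \<bar>g y\<bar> powr p" by (simp add: powr_mult)
        finally show "ennreal (\<bar>s y\<bar> powr p) \<le> ennreal (2 powr p) * ennreal (\<bar>g y\<bar> powr p)"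
          by (simp add: ennreal_mult[symmetric])
      qed
      also have "\<dots> < \<infinity>" using fin by (simp add: nn_integral_cmult ennreal_mult_less_top)
      finally show ?thesis .
    qed
    have ev: "eventually (\<lambda>\<xi>. (\<integral>\<^sup>+ y. ennreal (\<bar>s (y - \<xi>) - s y\<bar> powr p) \<partial>lebesgue) < ennreal e) (at 0)"
      using simple_translate_tendsto[OF p _ sfin] F(1) e unfolding s_def
      by (intro order_tendstoD(2)) auto
    show "eventually (\<lambda>\<xi>. (\<integral>\<^sup>+ y. ennreal (\<bar>g (y - \<xi>) - g y\<bar> powr p) \<partial>lebesgue) \<le> ennreal ((K + 2 * K * K) * e)) (at 0)"
      using ev
    proof eventually_elim
      case (elim \<xi>)
      have m1[measurable]: "(\<lambda>y. g (y - \<xi>)) \<in> borel_measurable lebesgue"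
        using meas_translate[OF gm, of "-\<xi>"] by simp
      have m2[measurable]: "(\<lambda>y. s (y - \<xi>)) \<in> borel_measurable lebesgue"
        using meas_translate[OF sm, of "-\<xi>"] by simp
      have pt: "ennreal (\<bar>g (y - \<xi>) - g y\<bar> powr p) \<le>
          ennreal K * ennreal (\<bar>g (y - \<xi>) - s (y - \<xi>)\<bar> powr p)
          + ennreal (K * K) * ennreal (\<bar>s (y - \<xi>) - s y\<bar> powr p)
          + ennreal (K * K) * ennreal (\<bar>g y - s y\<bar> powr p)" for y
      proof -
        define a where "a = g (y - \<xi>) - s (y - \<xi>)"
        define b where "b = s (y - \<xi>) - s y"
        define c where "c = s y - g y"
        have "g (y - \<xi>) - g y = a + (b + c)" by (simp add: a_def b_def c_def)
        then have "\<bar>g (y - \<xi>) - g y\<bar> powr p \<le> K * (\<bar>a\<bar> powr p + \<bar>b + c\<bar> powr p)"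
          using pow_ineq[OF p, of a "b + c"] by (simp add: K_def)
        also have "\<dots> \<le> K * (\<bar>a\<bar> powr p + K * (\<bar>b\<bar> powr p + \<bar>c\<bar> powr p))"
          using pow_ineq[OF p, of b c] Kpos by (intro mult_left_mono add_left_mono) (auto simp: K_def)
        also have "\<dots> = K * \<bar>a\<bar> powr p + (K * K) * \<bar>b\<bar> powr p + (K * K) * \<bar>c\<bar> powr p"
          by (simp add: algebra_simps)
        finally have "\<bar>g (y - \<xi>) - g y\<bar> powr p \<le> K * \<bar>a\<bar> powr p + (K * K) * \<bar>b\<bar> powr p + (K * K) * \<bar>c\<bar> powr p" .
        moreover have "\<bar>c\<bar> = \<bar>g y - s y\<bar>" by (simp add: c_def)
        ultimately show ?thesis using Kpos
          by (simp add: a_def b_def ennreal_mult[symmetric] ennreal_plus[symmetric] del: ennreal_plus)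
      qed
      have "(\<integral>\<^sup>+ y. ennreal (\<bar>g (y - \<xi>) - g y\<bar> powr p) \<partial>lebesgue) \<le>
          (\<integral>\<^sup>+ y. ennreal K * ennreal (\<bar>g (y - \<xi>) - s (y - \<xi>)\<bar> powr p)
          + ennreal (K * K) * ennreal (\<bar>s (y - \<xi>) - s y\<bar> powr p)
          + ennreal (K * K) * ennreal (\<bar>g y - s y\<bar> powr p) \<partial>lebesgue)"
        by (intro nn_integral_mono pt)
      also have "\<dots> = ennreal K * (\<integral>\<^sup>+ y. ennreal (\<bar>g (y - \<xi>) - s (y - \<xi>)\<bar> powr p) \<partial>lebesgue)
          + ennreal (K * K) * (\<integral>\<^sup>+ y. ennreal (\<bar>s (y - \<xi>) - s y\<bar> powr p) \<partial>lebesgue)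
          + ennreal (K * K) * (\<integral>\<^sup>+ y. ennreal (\<bar>g y - s y\<bar> powr p) \<partial>lebesgue)"
        by (simp add: nn_integral_add nn_integral_cmult)
      also have "(\<integral>\<^sup>+ y. ennreal (\<bar>g (y - \<xi>) - s (y - \<xi>)\<bar> powr p) \<partial>lebesgue)
          = (\<integral>\<^sup>+ y. ennreal (\<bar>g y - s y\<bar> powr p) \<partial>lebesgue)"
        by (rule nn_integral_translate_minus[where h="\<lambda>y. ennreal (\<bar>g y - s y\<bar> powr p)"]) measurable
      also have "ennreal K * (\<integral>\<^sup>+ y. ennreal (\<bar>g y - s y\<bar> powr p) \<partial>lebesgue)
          + ennreal (K * K) * (\<integral>\<^sup>+ y. ennreal (\<bar>s (y - \<xi>) - s y\<bar> powr p) \<partial>lebesgue)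
          + ennreal (K * K) * (\<integral>\<^sup>+ y. ennreal (\<bar>g y - s y\<bar> powr p) \<partial>lebesgue)
          \<le> ennreal K * ennreal e + ennreal (K * K) * ennreal e + ennreal (K * K) * ennreal e"
        using i elim unfolding s_def by (intro add_mono mult_left_mono) auto
      also have "\<dots> = ennreal ((K + 2 * K * K) * e)"
        using Kpos e by (simp add: ennreal_mult[symmetric] ennreal_plus[symmetric] algebra_simps del: ennreal_plus)
      finally show ?case .
    qed
  qed
qed



lemma minus_meas[measurable]:
  fixes a :: "'a::euclidean_space"
  shows "(\<lambda>y. y - a) \<in> lebesgue \<rightarrow>\<^sub>M lebesgue"
  using lebesgue_translate_eq(2)[of "-a"] by (simp add: add.commute)

lemma ball_leb_sets[measurable]: "ball (x::'a::euclidean_space) r \<in> sets lebesgue"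
  by simp

lemma cball_leb_sets[measurable]: "cball (x::'a::euclidean_space) r \<in> sets lebesgue"
  by simp

lemma shift_ball_integral:
  fixes f :: "'a::euclidean_space \<Rightarrow> real"
  assumes fm[measurable]: "f \<in> borel_measurable lebesgue"
  shows "(\<integral>\<^sup>+ y. ennreal (\<bar>f (y - \<xi>)\<bar> powr p) * indicator (ball x r) y \<partial>lebesgue)
       = (\<integral>\<^sup>+ y. ennreal (\<bar>f y\<bar> powr p) * indicator (ball (x - \<xi>) r) y \<partial>lebesgue)"
proof -
  have "indicator (ball x r) y = (indicator (ball (x - \<xi>) r) (y - \<xi>) :: ennreal)" for y
    by (simp add: indicator_def dist_norm algebra_simps)
  then have "(\<integral>\<^sup>+ y. ennreal (\<bar>f (y - \<xi>)\<bar> powr p) * indicator (ball x r) y \<partial>lebesgue)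
      = (\<integral>\<^sup>+ y. (\<lambda>z. ennreal (\<bar>f z\<bar> powr p) * indicator (ball (x - \<xi>) r) z) (y - \<xi>) \<partial>lebesgue)"
    by simp
  also have "\<dots> = (\<integral>\<^sup>+ y. ennreal (\<bar>f y\<bar> powr p) * indicator (ball (x - \<xi>) r) y \<partial>lebesgue)"
    by (rule nn_integral_translate_minus) measurable
  finally show ?thesis .
qed

lemma M_shift_bound:
  fixes f :: "'a::euclidean_space \<Rightarrow> real"
  assumes p: "p > 0" and fm[measurable]: "f \<in> borel_measurable lebesgue"
  shows "morrey_M p lam (\<lambda>y. f (y - \<xi>) - f y) x r
     \<le> ennreal (2 powr p) * (morrey_M p lam f (x - \<xi>) r + morrey_M p lam f x r)"
proof -
  have m1[measurable]: "(\<lambda>y. f (y - \<xi>)) \<in> borel_measurable lebesgue" by measurable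
  have "(\<integral>\<^sup>+ y \<in> ball x r. ennreal (\<bar>f (y - \<xi>) - f y\<bar> powr p) \<partial>lebesgue)
     \<le> (\<integral>\<^sup>+ y. ennreal (2 powr p) * (ennreal (\<bar>f (y - \<xi>)\<bar> powr p) * indicator (ball x r) y
              + ennreal (\<bar>f y\<bar> powr p) * indicator (ball x r) y) \<partial>lebesgue)"
  proof (intro nn_integral_mono)
    fix y
    have "\<bar>f (y - \<xi>) - f y\<bar> powr p \<le> 2 powr p * (\<bar>f (y - \<xi>)\<bar> powr p + \<bar>f y\<bar> powr p)"
      using pow_ineq[OF p, of "f (y - \<xi>)" "- f y"] by simp
    then have "ennreal (\<bar>f (y - \<xi>) - f y\<bar> powr p) \<le> ennreal (2 powr p) * (ennreal (\<bar>f (y - \<xi>)\<bar> powr p) + ennreal (\<bar>f y\<bar> powr p))"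
      by (simp add: ennreal_mult[symmetric] ennreal_plus[symmetric] del: ennreal_plus)
    then show "ennreal (\<bar>f (y - \<xi>) - f y\<bar> powr p) * indicator (ball x r) y
        \<le> ennreal (2 powr p) * (ennreal (\<bar>f (y - \<xi>)\<bar> powr p) * indicator (ball x r) y
              + ennreal (\<bar>f y\<bar> powr p) * indicator (ball x r) y)"
      by (auto simp: indicator_def)
  qed
  also have "\<dots> = ennreal (2 powr p) * ((\<integral>\<^sup>+ y. ennreal (\<bar>f (y - \<xi>)\<bar> powr p) * indicator (ball x r) y \<partial>lebesgue)
        + (\<integral>\<^sup>+ y \<in> ball x r. ennreal (\<bar>f y\<bar> powr p) \<partial>lebesgue))"
    by (simp add: nn_integral_cmult nn_integral_add)
  also have "(\<integral>\<^sup>+ y. ennreal (\<bar>f (y - \<xi>)\<bar> powr p) * indicator (ball x r) y \<partial>lebesgue)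
      = (\<integral>\<^sup>+ y \<in> ball (x - \<xi>) r. ennreal (\<bar>f y\<bar> powr p) \<partial>lebesgue)"
    by (rule shift_ball_integral[OF fm])
  finally have I: "(\<integral>\<^sup>+ y \<in> ball x r. ennreal (\<bar>f (y - \<xi>) - f y\<bar> powr p) \<partial>lebesgue)
     \<le> ennreal (2 powr p) * ((\<integral>\<^sup>+ y \<in> ball (x - \<xi>) r. ennreal (\<bar>f y\<bar> powr p) \<partial>lebesgue)
        + (\<integral>\<^sup>+ y \<in> ball x r. ennreal (\<bar>f y\<bar> powr p) \<partial>lebesgue))" .
  show ?thesis
    unfolding morrey_M_def
    using mult_left_mono[OF I, of "ennreal (r powr - lam)"]
    by (simp add: distrib_left mult.left_commute)
qed



lemma cover_balls:
  fixes R :: real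
  obtains Z :: "'a::euclidean_space set" where "finite Z"
    "\<And>x y. y \<in> ball x R \<Longrightarrow> \<exists>z\<in>Z. y \<in> ball (x + z) 1"
proof -
  have cpt: "compact (cball (0::'a) R)" by simp
  have cov: "cball (0::'a) R \<subseteq> (\<Union>z\<in>cball 0 R. ball z 1)" by force
  have opn: "\<And>T. T \<in> cball (0::'a) R \<Longrightarrow> open (ball T 1)" by simp
  obtain Z where Z: "Z \<subseteq> cball 0 R" "finite Z" "cball (0::'a) R \<subseteq> (\<Union>z\<in>Z. ball z 1)"
    using compactE_image[OF cpt opn cov] by blast
  show ?thesis
  proof (rule that[OF Z(2)])
    fix x y :: 'a assume "y \<in> ball x R"
    then have "y - x \<in> cball 0 R" by (simp add: dist_norm norm_minus_commute)
    then obtain z where z: "z \<in> Z" "y - x \<in> ball z 1" using Z(3) by blast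
    then have "y \<in> ball (x + z) 1" by (simp add: dist_norm algebra_simps)
    then show "\<exists>z\<in>Z. y \<in> ball (x + z) 1" using z by blast
  qed
qed

lemma H_bound:
  fixes f :: "'a::euclidean_space \<Rightarrow> real" and Z :: "'a set"
  assumes fm[measurable]: "f \<in> borel_measurable lebesgue"
    and Z: "finite Z" "\<And>x y. y \<in> ball x R \<Longrightarrow> \<exists>z\<in>Z. y \<in> ball (x + z) 1"
  shows "(\<integral>\<^sup>+ y. ennreal (\<bar>f y\<bar> powr p) * indicator (UNIV - ball 0 N) y * indicator (ball x R) y \<partial>lebesgue)
     \<le> of_nat (card Z) * (SUP x. \<integral>\<^sup>+ y \<in> ball x 1. ennreal (\<bar>f y\<bar> powr p) * indicator (UNIV - ball 0 N) y \<partial>lebesgue)"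
proof -
  let ?G = "(SUP x. \<integral>\<^sup>+ y \<in> ball x 1. ennreal (\<bar>f y\<bar> powr p) * indicator (UNIV - ball 0 N) y \<partial>lebesgue)"
  have ind: "(indicator (ball x R) y :: ennreal) \<le> (\<Sum>z\<in>Z. indicator (ball (x + z) 1) y)" for y
  proof (cases "y \<in> ball x R")
    case True
    then obtain z where z: "z \<in> Z" "y \<in> ball (x + z) 1" using Z(2) by blast
    have "(indicator (ball x R) y :: ennreal) = indicator (ball (x + z) 1) y" using True z by simp
    also have "\<dots> \<le> (\<Sum>z\<in>Z. indicator (ball (x + z) 1) y)"
      by (rule member_le_sum) (use z Z(1) in auto)
    finally show ?thesis .
  next
    case False then show ?thesis by simp
  qed
  have "(\<integral>\<^sup>+ y. ennreal (\<bar>f y\<bar> powr p) * indicator (UNIV - ball 0 N) y * indicator (ball x R) y \<partial>lebesgue)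
      \<le> (\<integral>\<^sup>+ y. (\<Sum>z\<in>Z. ennreal (\<bar>f y\<bar> powr p) * indicator (UNIV - ball 0 N) y * indicator (ball (x + z) 1) y) \<partial>lebesgue)"
  proof (intro nn_integral_mono)
    fix y
    show "ennreal (\<bar>f y\<bar> powr p) * indicator (UNIV - ball 0 N) y * indicator (ball x R) y
        \<le> (\<Sum>z\<in>Z. ennreal (\<bar>f y\<bar> powr p) * indicator (UNIV - ball 0 N) y * indicator (ball (x + z) 1) y)"
      using mult_left_mono[OF ind[of y], of "ennreal (\<bar>f y\<bar> powr p) * indicator (UNIV - ball 0 N) y"]
      by (simp add: sum_distrib_left)
  qed
  also have "\<dots> = (\<Sum>z\<in>Z. \<integral>\<^sup>+ y. ennreal (\<bar>f y\<bar> powr p) * indicator (UNIV - ball 0 N) y * indicator (ball (x + z) 1) y \<partial>lebesgue)"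
    by (rule nn_integral_sum) measurable
  also have "\<dots> \<le> (\<Sum>z\<in>Z. ?G)"
    by (intro sum_mono SUP_upper2[OF UNIV_I order_refl])
  also have "\<dots> = of_nat (card Z) * ?G" by simp
  finally show ?thesis .
qed



lemma main_zorko:
  fixes f :: "'a::euclidean_space \<Rightarrow> real" and p lam :: real
  assumes p1: "1 \<le> p" and lam: "0 \<le> lam"
    and fm[measurable]: "f \<in> borel_measurable lebesgue"
    and loc: "\<And>K. compact K \<Longrightarrow> (\<integral>\<^sup>+ y\<in>K. ennreal (\<bar>f y\<bar> powr p) \<partial>lebesgue) < \<infinity>"
    and V0: "((\<lambda>r. SUP x\<in>UNIV. morrey_M p lam f x r) \<longlongrightarrow> 0) (at_right 0)"
    and Vi: "((\<lambda>r. SUP x\<in>UNIV. morrey_M p lam f x r) \<longlongrightarrow> 0) at_top"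
    and Vs: "((\<lambda>N::real. SUP x\<in>UNIV. (\<integral>\<^sup>+ y \<in> ball x 1.
          ennreal (\<bar>f y\<bar> powr p) * indicator (UNIV - ball 0 N) y \<partial>lebesgue)) \<longlongrightarrow> 0) at_top"
  shows "((\<lambda>\<xi>. morrey_normp p lam (\<lambda>y. f (y - \<xi>) - f y)) \<longlongrightarrow> 0) (at 0)"
proof (rule ennreal_tendsto_0I)
  fix e :: real assume e: "e > 0"
  have p: "p > 0" using p1 by simp
  define K where "K = (2::real) powr p"
  have Kpos: "K > 0" by (simp add: K_def)
  define S where "S r = (SUP x\<in>UNIV. morrey_M p lam f x r)" for r
  define G where "G N = (SUP x\<in>UNIV. (\<integral>\<^sup>+ y \<in> ball x 1.
          ennreal (\<bar>f y\<bar> powr p) * indicator (UNIV - ball (0::'a) N) y \<partial>lebesgue))" for N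
  define e1 where "e1 = e / (2 * K)"
  have e1: "e1 > 0" using e Kpos by (simp add: e1_def)
  have "eventually (\<lambda>r. S r < ennreal e1) (at_right 0)"
    using V0 e1 unfolding S_def by (intro order_tendstoD(2)) auto
  then obtain \<delta>0 where \<delta>0: "\<delta>0 > 0" "\<And>r. 0 < r \<Longrightarrow> r < \<delta>0 \<Longrightarrow> S r < ennreal e1"
    by (auto simp: eventually_at_right_field)
  have "eventually (\<lambda>r. S r < ennreal e1) at_top"
    using Vi e1 unfolding S_def by (intro order_tendstoD(2)) auto
  then obtain R0 where R0: "\<And>r. r \<ge> R0 \<Longrightarrow> S r < ennreal e1"
    by (auto simp: eventually_at_top_linorder)
  define \<delta> where "\<delta> = min \<delta>0 1"
  define R where "R = max R0 1"
  have \<delta>: "\<delta> > 0" "\<delta> \<le> \<delta>0" using \<delta>0 by (auto simp: \<delta>_def)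
  obtain Z :: "'a set" where Z: "finite Z" "\<And>x y. y \<in> ball x R \<Longrightarrow> \<exists>z\<in>Z. y \<in> ball (x + z) 1"
    using cover_balls by blast
  define NZ where "NZ = real (card Z)"
  have NZ: "NZ \<ge> 0" by (simp add: NZ_def)
  define Dl where "Dl = \<delta> powr (- lam)"
  have Dl: "Dl > 0" using \<delta> by (simp add: Dl_def)
  define e2 where "e2 = e / (2 * Dl)"
  have e2: "e2 > 0" using e Dl by (simp add: e2_def)
  define e3 where "e3 = e / (4 * Dl * K * (NZ + 1))"
  have e3: "e3 > 0" using e Dl Kpos NZ by (simp add: e3_def)
  have "eventually (\<lambda>N. G N < ennreal e3) at_top"
    using Vs e3 unfolding G_def by (intro order_tendstoD(2)) auto
  then obtain N0 where N0: "\<And>N. N \<ge> N0 \<Longrightarrow> G N < ennreal e3"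
    by (auto simp: eventually_at_top_linorder)
  define N1 where "N1 = max N0 0"
  define N where "N = N1 + 1"
  have GN1: "G N1 < ennreal e3" using N0 by (simp add: N1_def)
  define g where "g y = f y * indicator (ball 0 (N + 1)) y" for y
  have gm[measurable]: "g \<in> borel_measurable lebesgue" unfolding g_def by measurable
  have gfin: "(\<integral>\<^sup>+ y. ennreal (\<bar>g y\<bar> powr p) \<partial>lebesgue) < \<infinity>"
  proof -
    have "(\<integral>\<^sup>+ y. ennreal (\<bar>g y\<bar> powr p) \<partial>lebesgue) \<le> (\<integral>\<^sup>+ y\<in>cball 0 (N + 1). ennreal (\<bar>f y\<bar> powr p) \<partial>lebesgue)"
      by (intro nn_integral_mono) (auto simp: g_def indicator_def)
    also have "\<dots> < \<infinity>" by (rule loc) simp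
    finally show ?thesis .
  qed
  have ev1: "eventually (\<lambda>\<xi>. (\<integral>\<^sup>+ y. ennreal (\<bar>g (y - \<xi>) - g y\<bar> powr p) \<partial>lebesgue) < ennreal e2) (at 0)"
    using Lp_translate_tendsto[OF p gm gfin] e2 by (intro order_tendstoD(2)) auto
  have ev2: "eventually (\<lambda>\<xi>::'a. norm \<xi> < 1) (at 0)"
    by (rule eventually_norm_less) simp
  show "eventually (\<lambda>\<xi>. morrey_normp p lam (\<lambda>y. f (y - \<xi>) - f y) \<le> ennreal e) (at 0)"
    using ev1 ev2
  proof eventually_elim
    case (elim \<xi>)
    let ?h = "\<lambda>y. f (y - \<xi>) - f y"
    have hm[measurable]: "?h \<in> borel_measurable lebesgue" by measurable
    have mid_int: "(\<integral>\<^sup>+ y\<in>ball x R. ennreal (\<bar>?h y\<bar> powr p) \<partial>lebesgue)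
        \<le> ennreal e2 + ennreal K * (ennreal NZ * ennreal e3 + ennreal NZ * ennreal e3)" for x
    proof -
      let ?F = "\<lambda>y. ennreal (\<bar>f y\<bar> powr p)"
      let ?H = "\<lambda>y. ennreal (\<bar>?h y\<bar> powr p)"
      have out1: "y - \<xi> \<notin> ball 0 N1" if "y \<notin> ball 0 N" for y
      proof -
        have "norm y \<ge> N" using that by (simp add: dist_norm)
        moreover have "norm y \<le> norm (y - \<xi>) + norm \<xi>" using norm_triangle_ineq[of "y - \<xi>" \<xi>] by simp
        ultimately have "norm (y - \<xi>) \<ge> N1" using elim(2) by (simp add: N_def)
        then show ?thesis by (simp add: dist_norm norm_minus_commute)
      qed
      have out2: "y \<notin> ball 0 N1" if "y \<notin> ball 0 N" for y
        using that by (auto simp: N_def)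
      have step1: "(\<integral>\<^sup>+ y\<in>ball x R. ?H y \<partial>lebesgue)
          \<le> (\<integral>\<^sup>+ y. ?H y * indicator (ball 0 N) y \<partial>lebesgue)
            + (\<integral>\<^sup>+ y. ?H y * indicator (UNIV - ball 0 N) y * indicator (ball x R) y \<partial>lebesgue)"
      proof -
        have "(\<integral>\<^sup>+ y\<in>ball x R. ?H y \<partial>lebesgue)
          \<le> (\<integral>\<^sup>+ y. ?H y * indicator (ball 0 N) y
            + ?H y * indicator (UNIV - ball 0 N) y * indicator (ball x R) y \<partial>lebesgue)"
          by (intro nn_integral_mono) (auto simp: indicator_def)
        also have "\<dots> = (\<integral>\<^sup>+ y. ?H y * indicator (ball 0 N) y \<partial>lebesgue)
            + (\<integral>\<^sup>+ y. ?H y * indicator (UNIV - ball 0 N) y * indicator (ball x R) y \<partial>lebesgue)"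
          by (rule nn_integral_add) measurable
        finally show ?thesis .
      qed
      have step2: "(\<integral>\<^sup>+ y. ?H y * indicator (ball 0 N) y \<partial>lebesgue) \<le> ennreal e2"
      proof -
        have "(\<integral>\<^sup>+ y. ?H y * indicator (ball 0 N) y \<partial>lebesgue)
            \<le> (\<integral>\<^sup>+ y. ennreal (\<bar>g (y - \<xi>) - g y\<bar> powr p) \<partial>lebesgue)"
        proof (intro nn_integral_mono)
          fix y
          show "?H y * indicator (ball 0 N) y \<le> ennreal (\<bar>g (y - \<xi>) - g y\<bar> powr p)"
          proof (cases "y \<in> ball 0 N")
            case True
            then have "norm y < N" by (simp add: dist_norm)
            moreover have "norm (y - \<xi>) \<le> norm y + norm \<xi>" by (rule norm_triangle_ineq4)
            ultimately have "norm (y - \<xi>) < N + 1" using elim(2) by simp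
            then have "g (y - \<xi>) = f (y - \<xi>)" by (simp add: g_def dist_norm indicator_def norm_minus_commute)
            moreover have "g y = f y" using \<open>norm y < N\<close> by (simp add: g_def dist_norm indicator_def)
            ultimately show ?thesis using True by simp
          qed simp
        qed
        also have "\<dots> \<le> ennreal e2" using elim(1) by simp
        finally show ?thesis .
      qed
      have step3: "(\<integral>\<^sup>+ y. ?H y * indicator (UNIV - ball 0 N) y * indicator (ball x R) y \<partial>lebesgue)
          \<le> ennreal K * ((\<integral>\<^sup>+ y. ?F (y - \<xi>) * indicator (UNIV - ball 0 N1) (y - \<xi>) * indicator (ball (x - \<xi>) R) (y - \<xi>) \<partial>lebesgue)
             + (\<integral>\<^sup>+ y. ?F y * indicator (UNIV - ball 0 N1) y * indicator (ball x R) y \<partial>lebesgue))"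
      proof -
        have "(\<integral>\<^sup>+ y. ?H y * indicator (UNIV - ball 0 N) y * indicator (ball x R) y \<partial>lebesgue)
          \<le> (\<integral>\<^sup>+ y. ennreal K * (?F (y - \<xi>) * indicator (UNIV - ball 0 N1) (y - \<xi>) * indicator (ball (x - \<xi>) R) (y - \<xi>)
             + ?F y * indicator (UNIV - ball 0 N1) y * indicator (ball x R) y) \<partial>lebesgue)"
        proof (intro nn_integral_mono)
          fix y
          show "?H y * indicator (UNIV - ball 0 N) y * indicator (ball x R) y
            \<le> ennreal K * (?F (y - \<xi>) * indicator (UNIV - ball 0 N1) (y - \<xi>) * indicator (ball (x - \<xi>) R) (y - \<xi>)
             + ?F y * indicator (UNIV - ball 0 N1) y * indicator (ball x R) y)"
          proof (cases "y \<notin> ball 0 N \<and> y \<in> ball x R")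
            case True
            then have i1: "y - \<xi> \<notin> ball 0 N1" "y \<notin> ball 0 N1" "y - \<xi> \<in> ball (x - \<xi>) R"
            proof -
              have a: "y \<notin> ball 0 N" "y \<in> ball x R" using True by auto
              show "y - \<xi> \<notin> ball 0 N1" by (rule out1[OF a(1)])
              show "y \<notin> ball 0 N1" by (rule out2[OF a(1)])
              show "y - \<xi> \<in> ball (x - \<xi>) R" using a(2) by (simp add: dist_norm algebra_simps)
            qed
            have "\<bar>?h y\<bar> powr p \<le> K * (\<bar>f (y - \<xi>)\<bar> powr p + \<bar>f y\<bar> powr p)"
              using pow_ineq[OF p, of "f (y - \<xi>)" "- f y"] by (simp add: K_def)
            then have "?H y \<le> ennreal K * (?F (y - \<xi>) + ?F y)"
              using Kpos by (simp add: ennreal_mult[symmetric] ennreal_plus[symmetric] del: ennreal_plus)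
            then show ?thesis using True i1 by simp
          next
            case False
            then show ?thesis by (auto simp: indicator_def)
          qed
        qed
        also have "\<dots> = ennreal K * ((\<integral>\<^sup>+ y. ?F (y - \<xi>) * indicator (UNIV - ball 0 N1) (y - \<xi>) * indicator (ball (x - \<xi>) R) (y - \<xi>) \<partial>lebesgue)
             + (\<integral>\<^sup>+ y. ?F y * indicator (UNIV - ball 0 N1) y * indicator (ball x R) y \<partial>lebesgue))"
          by (simp add: nn_integral_cmult nn_integral_add)
        finally show ?thesis .
      qed
      have step4: "(\<integral>\<^sup>+ y. ?F (y - \<xi>) * indicator (UNIV - ball 0 N1) (y - \<xi>) * indicator (ball (x - \<xi>) R) (y - \<xi>) \<partial>lebesgue)
          = (\<integral>\<^sup>+ y. ?F y * indicator (UNIV - ball 0 N1) y * indicator (ball (x - \<xi>) R) y \<partial>lebesgue)"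
        by (rule nn_integral_translate_minus[where h="\<lambda>y. ?F y * indicator (UNIV - ball 0 N1) y * indicator (ball (x - \<xi>) R) y"]) measurable
      have HB: "(\<integral>\<^sup>+ y. ?F y * indicator (UNIV - ball 0 N1) y * indicator (ball x' R) y \<partial>lebesgue)
          \<le> ennreal NZ * ennreal e3" for x'
      proof -
        have "(\<integral>\<^sup>+ y. ?F y * indicator (UNIV - ball 0 N1) y * indicator (ball x' R) y \<partial>lebesgue)
            \<le> of_nat (card Z) * G N1"
          unfolding G_def by (rule H_bound[OF fm Z])
        also have "\<dots> \<le> ennreal NZ * ennreal e3"
          using GN1 by (intro mult_mono) (auto simp: NZ_def ennreal_of_nat_eq_real_of_nat)
        finally show ?thesis .
      qed
      have "(\<integral>\<^sup>+ y\<in>ball x R. ?H y \<partial>lebesgue)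
          \<le> ennreal e2 + ennreal K * (ennreal NZ * ennreal e3 + ennreal NZ * ennreal e3)"
        using step1 step2 step3 HB[of "x - \<xi>"] HB[of x] unfolding step4
        by (smt (verit) add_mono mult_left_mono order_trans zero_le)
      then show ?thesis by simp
    qed
    have bound: "morrey_M p lam ?h x r \<le> ennreal e" if r: "r > 0" for x r
    proof (cases "r < \<delta> \<or> r \<ge> R")
      case True
      then have Sr: "S r < ennreal e1"
        using \<delta>0(2)[OF r] R0 \<delta> by (auto simp: R_def)
      have "morrey_M p lam ?h x r \<le> ennreal K * (morrey_M p lam f (x - \<xi>) r + morrey_M p lam f x r)"
        using M_shift_bound[OF p fm] by (simp add: K_def)
      also have "\<dots> \<le> ennreal K * (S r + S r)"
        unfolding S_def by (intro mult_left_mono add_mono SUP_upper) auto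
      also have "\<dots> \<le> ennreal K * (ennreal e1 + ennreal e1)"
        using Sr by (intro mult_left_mono add_mono) auto
      also have "\<dots> = ennreal e"
        using Kpos e1 by (simp add: e1_def ennreal_mult[symmetric] ennreal_plus[symmetric] del: ennreal_plus)
      finally show ?thesis .
    next
      case False
      then have rr: "\<delta> \<le> r" "r < R" by auto
      have "r powr - lam \<le> Dl" unfolding Dl_def
        by (rule powr_mono2') (use lam \<delta> rr in auto)
      then have c1: "ennreal (r powr - lam) \<le> ennreal Dl" by (rule ennreal_leI)
      have c2: "(\<integral>\<^sup>+ y\<in>ball x r. ennreal (\<bar>?h y\<bar> powr p) \<partial>lebesgue) \<le> (\<integral>\<^sup>+ y\<in>ball x R. ennreal (\<bar>?h y\<bar> powr p) \<partial>lebesgue)"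
        using rr by (intro nn_integral_mono) (auto simp: indicator_def)
      have "morrey_M p lam ?h x r \<le> ennreal Dl * (ennreal e2 + ennreal K * (ennreal NZ * ennreal e3 + ennreal NZ * ennreal e3))"
        unfolding morrey_M_def by (intro mult_mono c1 order_trans[OF c2 mid_int]) auto
      also have "\<dots> = ennreal (Dl * (e2 + K * (NZ * e3 + NZ * e3)))"
        using Dl e2 e3 Kpos NZ by (simp add: ennreal_mult[symmetric] ennreal_plus[symmetric] del: ennreal_plus)
      also have "\<dots> \<le> ennreal e"
      proof (intro ennreal_leI)
        have nz1: "NZ + 1 \<noteq> 0" "Dl \<noteq> 0" "K \<noteq> 0" using NZ Dl Kpos by auto
        have a1: "Dl * e2 = e / 2" using nz1 by (simp add: e2_def)
        have q: "e3 * (4 * Dl * K * (NZ + 1)) = e" using nz1 by (simp add: e3_def)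
        have "Dl * (K * (NZ * e3 + NZ * e3)) * (2 * (NZ + 1)) = NZ * (e3 * (4 * Dl * K * (NZ + 1)))"
          by (simp add: algebra_simps)
        then have "Dl * (K * (NZ * e3 + NZ * e3)) * (2 * (NZ + 1)) = e * NZ" using q by simp
        moreover have "2 * (NZ + 1) \<noteq> 0" using nz1 by simp
        ultimately have a2: "Dl * (K * (NZ * e3 + NZ * e3)) = e * NZ / (2 * (NZ + 1))"
          by (simp add: eq_divide_eq)
        have "Dl * (e2 + K * (NZ * e3 + NZ * e3)) = e / 2 + e * NZ / (2 * (NZ + 1))"
          using a1 a2 by (simp add: distrib_left)
        also have "\<dots> \<le> e / 2 + e / 2"
          using e NZ by (simp add: field_simps)
        finally show "Dl * (e2 + K * (NZ * e3 + NZ * e3)) \<le> e" by simp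
      qed
      finally show ?thesis .
    qed
    show ?case unfolding morrey_normp_def
      by (intro SUP_least) (use bound in auto)
  qed
qed


theorem theorem4p3:
  fixes p lam :: real
  assumes "0 \<le> lam" and "lam < real DIM('a::euclidean_space)" and "1 \<le> p"
  shows "(V0inf_star_morrey p lam :: ('a \<Rightarrow> real) set) \<subseteq> zorko_morrey p lam"
proof
  fix f :: "'a \<Rightarrow> real"
  assume "f \<in> V0inf_star_morrey p lam"
  then have f: "f \<in> morrey_space p lam"
    and V0: "((\<lambda>r. SUP x\<in>UNIV. morrey_M p lam f x r) \<longlongrightarrow> 0) (at_right 0)"
    and Vi: "((\<lambda>r. SUP x\<in>UNIV. morrey_M p lam f x r) \<longlongrightarrow> 0) at_top"
    and Vs: "((\<lambda>N::real. SUP x\<in>UNIV. (\<integral>\<^sup>+ y \<in> ball x 1.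
          ennreal (\<bar>f y\<bar> powr p) * indicator (UNIV - ball 0 N) y \<partial>lebesgue)) \<longlongrightarrow> 0) at_top"
    unfolding V0inf_star_morrey_def V0_morrey_def Vinf_morrey_def Vstar_morrey_def by auto
  from f have fm: "f \<in> borel_measurable lebesgue"
    and loc: "\<And>K. compact K \<Longrightarrow> (\<integral>\<^sup>+ y\<in>K. ennreal (\<bar>f y\<bar> powr p) \<partial>lebesgue) < \<infinity>"
    unfolding morrey_space_def by auto
  have "((\<lambda>\<xi>. morrey_normp p lam (\<lambda>y. f (y - \<xi>) - f y)) \<longlongrightarrow> 0) (at 0)"
    by (rule main_zorko[OF assms(3) assms(1) fm loc V0 Vi Vs])
  then show "f \<in> zorko_morrey p lam"
    unfolding zorko_morrey_def using f by simp
qed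

end
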